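(* Let $\mathcal{X}$ be a complete separable metric space with its Borel $\sigma$-field. For each $\lambda>0$ let $p_{0,\lambda},p_{1,\lambda}$ be probability measures on $\mathcal{X}$ with $p_{1,\lambda}\ll p_{0,\lambda}$, and let $L^{(\lambda)}=\frac{dp_{1,\lambda}}{dp_{0,\lambda}}$; write $\mathbb{E}_{0,\lambda}$ for expectation under $p_{0,\lambda}$. Assume that as $\lambda\to\infty$, $p_{0,\lambda}\to p_0$ and $p_{1,\lambda}\to p_1$ weakly, for some probability measures $p_0,p_1$ on $\mathcal{X}$, and that there is a finite constant $c>0$ with $\mathbb{E}_{0,\lambda}[(L^{(\lambda)})^2]\le c$ for all $\lambda>0$. Then $p_1\ll p_0$. If moreover $L:=\frac{dp_1}{dp_0}$ satisfies $\mathbb{E}_{0,\lambda}[(L^{(\lambda)})^2]\to\mathbb{E}_{p_0}[L^2]$ as $\lambda\to\infty$, then: (i) the law of $L^{(\lambda)}$ under $p_{0,\lambda}$ converges weakly as $\lambda\to\infty$ to the law of $L$ under $p_0$; (ii) $\mathrm{KL}(p_{1,\lambda}\Vert p_{0,\lambda})\to\mathrm{KL}(p_1\Vert p_0)$ as $\lambda\to\infty$.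
   Context: $\mathrm{KL}(P\Vert Q)=\mathbb{E}_P[\log\frac{dP}{dQ}]$ denotes the Kullback–Leibler divergence. *)

theory Defs
  imports "HOL-Probability.Probability"
begin

definition weak_conv_filter :: "('i \<Rightarrow> 'a::topological_space measure) \<Rightarrow> 'a measure \<Rightarrow> 'i filter \<Rightarrow> bool" where
  "weak_conv_filter M N F \<longleftrightarrow>
     (\<forall>f :: 'a \<Rightarrow> real. continuous_on UNIV f \<and> bounded (range f) \<longrightarrow>
        ((\<lambda>i. \<integral>x. f x \<partial>M i) \<longlongrightarrow> (\<integral>x. f x \<partial>N)) F)"

text \<open>KL(P || Q) with natural logarithm: E_P[ln dP/dQ].\<close>
definition KL :: "'a measure \<Rightarrow> 'a measure \<Rightarrow> real" where
  "KL P Q = KL_divergence (exp 1) Q P"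

end

theory Submission
  imports Defs "HOL-Real_Asymp.Real_Asymp"
begin

definition bc :: "('a::topological_space \<Rightarrow> real) \<Rightarrow> bool" where
  "bc g \<longleftrightarrow> continuous_on UNIV g \<and> (\<exists>B. \<forall>x. \<bar>g x\<bar> \<le> B)"

lemma bc_measurable:
  assumes "bc g" "sets M = sets borel"
  shows "g \<in> borel_measurable M"
proof -
  have "g \<in> borel_measurable borel"
    using assms(1) by (auto simp: bc_def intro: borel_measurable_continuous_onI)
  then show ?thesis unfolding measurable_cong_sets[OF assms(2) refl] .
qed

lemma bc_integrable:
  assumes "bc g" "sets M = sets borel" "finite_measure M"
  shows "integrable M g"
proof -
  interpret finite_measure M by fact
  obtain B where "\<forall>x. \<bar>g x\<bar> \<le> B" using assms(1) by (auto simp: bc_def)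
  then show ?thesis
    by (intro integrable_const_bound[where B=B] bc_measurable[OF assms(1,2)]) auto
qed

lemma inner_approx:
  fixes M :: "'a::polish_space measure"
  assumes "finite_measure M" "sets M = sets borel" "A \<in> sets borel" "e > 0"
  shows "\<exists>K. compact K \<and> K \<subseteq> A \<and> measure M A < measure M K + e"
proof -
  interpret finite_measure M by fact
  have eq: "emeasure M A = (SUP K \<in> {K. K \<subseteq> A \<and> compact K}. emeasure M K)"
    by (rule inner_regular[OF assms(2) _ assms(3)]) simp
  show ?thesis
  proof (cases "measure M A < e")
    case True then show ?thesis using assms(4) by (intro exI[of _ "{}"]) auto
  next
    case False
    have "ennreal (measure M A - e) < emeasure M A"
      using False assms(4) by (simp add: emeasure_eq_measure ennreal_less_iff)
    then obtain K where K: "K \<subseteq> A" "compact K" "ennreal (measure M A - e) < emeasure M K"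
      unfolding eq by (auto simp: less_SUP_iff)
    then show ?thesis
      using False by (intro exI[of _ K]) (auto simp: emeasure_eq_measure ennreal_less_iff)
  qed
qed

lemma outer_approx:
  fixes M :: "'a::polish_space measure"
  assumes "finite_measure M" "sets M = sets borel" "A \<in> sets borel" "e > 0"
  shows "\<exists>U. open U \<and> A \<subseteq> U \<and> measure M U < measure M A + e"
proof -
  interpret finite_measure M by fact
  have eq: "emeasure M A = (INF U \<in> {U. A \<subseteq> U \<and> open U}. emeasure M U)"
    by (rule outer_regular[OF assms(2) _ assms(3)]) simp
  have "emeasure M A < ennreal (measure M A + e)"
    using assms(4) by (simp add: emeasure_eq_measure ennreal_less_iff)
  then obtain U where U: "A \<subseteq> U" "open U" "emeasure M U < ennreal (measure M A + e)"
    unfolding eq by (auto simp: INF_less_iff)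
  then show ?thesis
    by (intro exI[of _ U]) (auto simp: emeasure_eq_measure ennreal_less_iff)
qed

lemma sep_fun:
  fixes K U :: "'a::metric_space set"
  assumes "compact K" "open U" "K \<subseteq> U"
  obtains g :: "'a \<Rightarrow> real" where "continuous_on UNIV g" "\<And>x. 0 \<le> g x" "\<And>x. g x \<le> 1"
    "\<And>x. x \<in> K \<Longrightarrow> g x = 1" "\<And>x. x \<notin> U \<Longrightarrow> g x = 0"
proof (cases "K = {}")
  case True
  show ?thesis by (rule that[of "\<lambda>x. 0"]) (auto simp: True)
next
  case Kne: False
  show ?thesis
  proof (cases "U = UNIV")
    case True
    show ?thesis by (rule that[of "\<lambda>x. 1"]) (auto simp: True)
  next
    case False
    define C where "C = - U"
    have Cne: "C \<noteq> {}" using False by (auto simp: C_def)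
    have Cc: "closed C" using assms(2) by (auto simp: C_def)
    have Kc: "closed K" using assms(1) by (rule compact_imp_closed)
    have pos: "infdist x K + infdist x C > 0" for x
    proof -
      have "infdist x K \<ge> 0" "infdist x C \<ge> 0" by (auto simp: infdist_nonneg)
      moreover have "\<not> (infdist x K = 0 \<and> infdist x C = 0)"
        using in_closed_iff_infdist_zero[OF Kc Kne, of x] in_closed_iff_infdist_zero[OF Cc Cne, of x]
          assms(3) by (auto simp: C_def)
      ultimately show ?thesis by linarith
    qed
    define g where "g x = infdist x C / (infdist x K + infdist x C)" for x
    show ?thesis
    proof (rule that[of g])
      show "continuous_on UNIV g"
        unfolding g_def using pos
        by (intro continuous_on_divide continuous_on_add continuous_on_infdist continuous_on_id)
           (auto simp: less_le)
      show "0 \<le> g x" for x using pos[of x] by (auto simp: g_def infdist_nonneg)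
      show "g x \<le> 1" for x using pos[of x] by (auto simp: g_def infdist_nonneg divide_le_eq)
      show "g x = 1" if "x \<in> K" for x
        using that pos[of x] in_closed_iff_infdist_zero[OF Kc Kne, of x] by (auto simp: g_def)
      show "g x = 0" if "x \<notin> U" for x
        using that in_closed_iff_infdist_zero[OF Cc Cne, of x] by (auto simp: g_def C_def)
    qed
  qed
qed

lemma bc_mult: assumes "bc g" shows "bc (\<lambda>x. g x * c)"
proof -
  obtain B where B: "\<forall>x. \<bar>g x\<bar> \<le> B" and c: "continuous_on UNIV g" using assms by (auto simp: bc_def)
  have "\<bar>g x * c\<bar> \<le> B * \<bar>c\<bar>" for x
    using B by (simp add: abs_mult mult_right_mono)
  then show ?thesis using c unfolding bc_def by (auto intro!: continuous_intros)
qed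

lemma bc_add: assumes "bc g1" "bc g2" shows "bc (\<lambda>x. g1 x + g2 x)"
proof -
  obtain B1 where B1: "\<forall>x. \<bar>g1 x\<bar> \<le> B1" and c1: "continuous_on UNIV g1" using assms by (auto simp: bc_def)
  obtain B2 where B2: "\<forall>x. \<bar>g2 x\<bar> \<le> B2" and c2: "continuous_on UNIV g2" using assms by (auto simp: bc_def)
  have "\<bar>g1 x + g2 x\<bar> \<le> B1 + B2" for x
    using B1[rule_format, of x] B2[rule_format, of x] abs_triangle_ineq[of "g1 x" "g2 x"] by linarith
  then show ?thesis using c1 c2 unfolding bc_def by (auto intro!: continuous_intros)
qed

lemma indicator_approx:
  fixes M :: "'a::polish_space measure"
  assumes "prob_space M" "sets M = sets borel" "A \<in> sets borel" "e > 0"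
  shows "\<exists>g. bc g \<and> (\<forall>x. 0 \<le> g x \<and> g x \<le> 1) \<and> (\<integral>x. \<bar>indicator A x - g x\<bar> \<partial>M) < e"
proof -
  interpret prob_space M by fact
  have fm: "finite_measure M" by unfold_locales
  obtain K where K: "compact K" "K \<subseteq> A" "measure M A < measure M K + e/2"
    using inner_approx[OF fm assms(2,3), of "e/2"] assms(4) by auto
  obtain U where U: "open U" "A \<subseteq> U" "measure M U < measure M A + e/2"
    using outer_approx[OF fm assms(2,3), of "e/2"] assms(4) by auto
  have KU: "K \<subseteq> U" using K U by auto
  obtain g :: "'a \<Rightarrow> real" where g: "continuous_on UNIV g" "\<And>x. 0 \<le> g x" "\<And>x. g x \<le> 1"
    "\<And>x. x \<in> K \<Longrightarrow> g x = 1" "\<And>x. x \<notin> U \<Longrightarrow> g x = 0"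
    by (fact sep_fun[OF K(1) U(1) KU])
  have bcg: "bc g" unfolding bc_def using g by (intro conjI exI[of _ 1]) auto
  have Ks: "K \<in> sets M" using K(1) assms(2) by (simp add: compact_imp_closed borel_closed)
  have Us: "U \<in> sets M" using U(1) assms(2) by (simp add: borel_open)
  have As: "A \<in> sets M" using assms(2,3) by simp
  have iI: "integrable M (indicator B :: 'a \<Rightarrow> real)" if "B \<in> sets M" for B
    using that by (intro integrable_real_indicator) (simp_all add: less_top[symmetric])
  have "(\<integral>x. \<bar>indicator A x - g x\<bar> \<partial>M) \<le> (\<integral>x. indicator (U - K) x \<partial>M)"
  proof (rule integral_mono)
    show "integrable M (\<lambda>x. \<bar>indicator A x - g x\<bar>)"
      using bc_integrable[OF bcg assms(2) fm] iI[OF As]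
      by (intro integrable_abs Bochner_Integration.integrable_diff)
    show "integrable M (indicator (U - K) :: 'a \<Rightarrow> real)"
      using Us Ks by (intro iI) auto
    show "\<bar>indicator A x - g x\<bar> \<le> (indicator (U - K) x :: real)" for x
      using g(2-5)[of x] K U by (auto simp: indicator_def)
  qed
  also have "\<dots> = measure M (U - K)" using Us Ks by simp
  also have "\<dots> = measure M U - measure M K"
    using Us Ks KU by (simp add: finite_measure_Diff)
  also have "\<dots> < e" using K(3) U(3) by linarith
  finally show ?thesis using bcg g by blast
qed

lemma L1_density:
  fixes M :: "'a::polish_space measure"
  assumes P: "prob_space M" and S: "sets M = sets borel" and "integrable M f"
  shows "\<forall>e>0. \<exists>g. bc g \<and> (\<integral>x. \<bar>f x - g x\<bar> \<partial>M) < e"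
  using assms(3)
proof (induction rule: integrable_induct)
  case (base A c)
  interpret prob_space M by fact
  have fm: "finite_measure M" by unfold_locales
  show ?case
  proof (intro allI impI)
    fix e :: real assume e: "e > 0"
    define e' where "e' = e / (\<bar>c\<bar> + 1)"
    have e': "e' > 0" using e by (simp add: e'_def)
    have Ab: "A \<in> sets borel" using base(1) S by simp
    obtain g where g: "bc g" "\<forall>x. 0 \<le> g x \<and> g x \<le> 1" "(\<integral>x. \<bar>indicator A x - g x\<bar> \<partial>M) < e'"
      using indicator_approx[OF P S Ab e'] by blast
    have bcg: "bc (\<lambda>x. g x * c)"
      using g(1) by (rule bc_mult)
    have As: "A \<in> sets M" using base(1) .
    have "(\<integral>x. \<bar>indicator A x *\<^sub>R c - g x * c\<bar> \<partial>M) = (\<integral>x. \<bar>c\<bar> * \<bar>indicator A x - g x\<bar> \<partial>M)"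
    proof (intro Bochner_Integration.integral_cong refl)
      fix x
      have "indicator A x *\<^sub>R c - g x * c = (indicator A x - g x) * c"
        by (simp add: left_diff_distrib)
      then show "\<bar>indicator A x *\<^sub>R c - g x * c\<bar> = \<bar>c\<bar> * \<bar>indicator A x - g x\<bar>"
        by (simp add: abs_mult)
    qed
    also have "\<dots> = \<bar>c\<bar> * (\<integral>x. \<bar>indicator A x - g x\<bar> \<partial>M)" by simp
    also have "\<dots> \<le> \<bar>c\<bar> * e'" using g(3) by (intro mult_left_mono) auto
    also have "\<dots> < e" using e by (simp add: e'_def field_simps)
    finally show "\<exists>g. bc g \<and> (\<integral>x. \<bar>indicator A x *\<^sub>R c - g x\<bar> \<partial>M) < e"
      using bcg by (intro exI[of _ "\<lambda>x. g x * c"] conjI)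
  qed
next
  case (add f1 f2)
  interpret prob_space M by fact
  have fm: "finite_measure M" by unfold_locales
  show ?case
  proof (intro allI impI)
    fix e :: real assume e: "e > 0"
    have e2: "e/2 > 0" using e by simp
    obtain g1 where g1: "bc g1" "(\<integral>x. \<bar>f1 x - g1 x\<bar> \<partial>M) < e/2" using add.IH(1) e2 by blast
    obtain g2 where g2: "bc g2" "(\<integral>x. \<bar>f2 x - g2 x\<bar> \<partial>M) < e/2" using add.IH(2) e2 by blast
    have bcg: "bc (\<lambda>x. g1 x + g2 x)"
      using g1(1) g2(1) by (rule bc_add)
    have i1: "integrable M (\<lambda>x. \<bar>f1 x - g1 x\<bar>)"
      using bc_integrable[OF g1(1) S fm] add.hyps(1) by auto
    have i2: "integrable M (\<lambda>x. \<bar>f2 x - g2 x\<bar>)"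
      using bc_integrable[OF g2(1) S fm] add.hyps(2) by auto
    have "(\<integral>x. \<bar>(f1 x + f2 x) - (g1 x + g2 x)\<bar> \<partial>M) \<le> (\<integral>x. \<bar>f1 x - g1 x\<bar> + \<bar>f2 x - g2 x\<bar> \<partial>M)"
      using i1 i2 bc_integrable[OF g1(1) S fm] bc_integrable[OF g2(1) S fm] add.hyps
      by (intro integral_mono) auto
    also have "\<dots> = (\<integral>x. \<bar>f1 x - g1 x\<bar> \<partial>M) + (\<integral>x. \<bar>f2 x - g2 x\<bar> \<partial>M)"
      using i1 i2 by simp
    also have "\<dots> < e" using g1 g2 by simp
    finally show "\<exists>g. bc g \<and> (\<integral>x. \<bar>(f1 x + f2 x) - g x\<bar> \<partial>M) < e" using bcg by (intro exI[of _ "\<lambda>x. g1 x + g2 x"] conjI)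
  qed
next
  case (lim f s)
  interpret prob_space M by fact
  have fm: "finite_measure M" by unfold_locales
  have conv: "(\<lambda>i. \<integral>x. \<bar>f x - s i x\<bar> \<partial>M) \<longlonglongrightarrow> (\<integral>x. 0 \<partial>M)"
  proof (rule integral_dominated_convergence[where w="\<lambda>x. 3 * \<bar>f x\<bar>"])
    show "(\<lambda>x. 0::real) \<in> borel_measurable M" by simp
    show "(\<lambda>x. \<bar>f x - s i x\<bar>) \<in> borel_measurable M" for i using lim.hyps(1,4) by auto
    show "integrable M (\<lambda>x. 3 * \<bar>f x\<bar>)" using lim.hyps(4) by auto
    show "AE x in M. (\<lambda>i. \<bar>f x - s i x\<bar>) \<longlonglongrightarrow> 0"
    proof (rule AE_I2)
      fix x assume "x \<in> space M"
      then have "(\<lambda>i. f x - s i x) \<longlonglongrightarrow> f x - f x" by (intro tendsto_intros lim.hyps(2))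
      then have "(\<lambda>i. \<bar>f x - s i x\<bar>) \<longlonglongrightarrow> \<bar>f x - f x\<bar>" by (rule tendsto_rabs)
      then show "(\<lambda>i. \<bar>f x - s i x\<bar>) \<longlonglongrightarrow> 0" by simp
    qed
    show "AE x in M. norm \<bar>f x - s i x\<bar> \<le> 3 * \<bar>f x\<bar>" for i
      proof (rule AE_I2)
      fix x assume "x \<in> space M"
      then have "\<bar>s i x\<bar> \<le> 2 * \<bar>f x\<bar>" using lim.hyps(3)[of x i] by simp
      then show "norm \<bar>f x - s i x\<bar> \<le> 3 * \<bar>f x\<bar>" by simp
    qed
  qed
  show ?case
  proof (intro allI impI)
    fix e :: real assume e: "e > 0"
    from conv have c0: "(\<lambda>i. \<integral>x. \<bar>f x - s i x\<bar> \<partial>M) \<longlonglongrightarrow> 0" by simp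
    have "\<forall>\<^sub>F i in sequentially. (\<integral>x. \<bar>f x - s i x\<bar> \<partial>M) < e/2"
      by (rule order_tendstoD(2)[OF c0]) (use e in simp)
    then obtain i where i: "(\<integral>x. \<bar>f x - s i x\<bar> \<partial>M) < e/2"
      by (auto simp: eventually_sequentially)
    have e2: "e/2 > 0" using e by simp
    obtain g where g: "bc g" "(\<integral>x. \<bar>s i x - g x\<bar> \<partial>M) < e/2" using lim.IH e2 by blast
    have ig: "integrable M g" using bc_integrable[OF g(1) S fm] .
    have "(\<integral>x. \<bar>f x - g x\<bar> \<partial>M) \<le> (\<integral>x. \<bar>f x - s i x\<bar> + \<bar>s i x - g x\<bar> \<partial>M)"
      using ig lim.hyps(1,4) by (intro integral_mono) auto
    also have "\<dots> = (\<integral>x. \<bar>f x - s i x\<bar> \<partial>M) + (\<integral>x. \<bar>s i x - g x\<bar> \<partial>M)"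
      using ig lim.hyps(1,4) by (intro Bochner_Integration.integral_add) auto
    also have "\<dots> < e" using i g by simp
    finally show "\<exists>g. bc g \<and> (\<integral>x. \<bar>f x - g x\<bar> \<partial>M) < e" using g by (intro exI[of _ g] conjI)
  qed
qed

lemma sq_bound_aux: "(a - b)\<^sup>2 \<le> 2 * a\<^sup>2 + 2 * (b::real)\<^sup>2"
proof -
  have "(a - b)\<^sup>2 = a\<^sup>2 - 2*a*b + b\<^sup>2" by (simp add: power2_diff)
  moreover have "(a + b)\<^sup>2 = a\<^sup>2 + 2*a*b + b\<^sup>2" by (simp add: power2_sum)
  moreover have "0 \<le> (a + b)\<^sup>2" by simp
  ultimately show ?thesis by linarith
qed

lemma sq_int:
  fixes f g :: "'a \<Rightarrow> real"
  assumes "finite_measure M" "f \<in> borel_measurable M" "integrable M (\<lambda>x. (f x)\<^sup>2)"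
    "g \<in> borel_measurable M" "\<And>x. \<bar>g x\<bar> \<le> B"
  shows "integrable M (\<lambda>x. (f x - g x)\<^sup>2)"
proof (rule Bochner_Integration.integrable_bound[where f="\<lambda>x. 2 * (f x)\<^sup>2 + 2 * B\<^sup>2"])
  interpret finite_measure M by fact
  show "integrable M (\<lambda>x. 2 * (f x)\<^sup>2 + 2 * B\<^sup>2)" using assms(3) by auto
  show "(\<lambda>x. (f x - g x)\<^sup>2) \<in> borel_measurable M" using assms(2,4) by auto
  show "AE x in M. norm ((f x - g x)\<^sup>2) \<le> norm (2 * (f x)\<^sup>2 + 2 * B\<^sup>2)"
  proof (rule AE_I2)
    fix x
    have "(g x)\<^sup>2 \<le> B\<^sup>2" using assms(5)[of x] by (metis abs_le_square_iff power2_abs abs_ge_zero order_trans abs_of_nonneg)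
    then show "norm ((f x - g x)\<^sup>2) \<le> norm (2 * (f x)\<^sup>2 + 2 * B\<^sup>2)"
      using sq_bound_aux[of "f x" "g x"] by simp
  qed
qed

lemma abs_le_1_sq: "\<bar>a::real\<bar> \<le> 1 + a\<^sup>2"
proof (cases "\<bar>a\<bar> \<le> 1")
  case True then show ?thesis by (simp add: add_increasing2)
next
  case False
  have "a\<^sup>2 = \<bar>a\<bar> * \<bar>a\<bar>" by (simp add: power2_eq_square abs_mult[symmetric])
  moreover have "\<bar>a\<bar> * 1 \<le> \<bar>a\<bar> * \<bar>a\<bar>" using False by (intro mult_left_mono) auto
  ultimately show ?thesis by simp
qed

lemma sq_int_imp_int:
  fixes f :: "'a \<Rightarrow> real"
  assumes "finite_measure M" "f \<in> borel_measurable M" "integrable M (\<lambda>x. (f x)\<^sup>2)"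
  shows "integrable M f"
proof (rule Bochner_Integration.integrable_bound[where f="\<lambda>x. 1 + (f x)\<^sup>2"])
  interpret finite_measure M by fact
  show "integrable M (\<lambda>x. 1 + (f x)\<^sup>2)" using assms(3) by auto
  show "AE x in M. norm (f x) \<le> norm (1 + (f x)\<^sup>2)"
    using abs_le_1_sq by (auto intro!: AE_I2)
qed fact

definition tr :: "real \<Rightarrow> real \<Rightarrow> real" where "tr N y = max (- N) (min N y)"

lemma tr_lip: "N \<ge> 0 \<Longrightarrow> \<bar>tr N a - tr N b\<bar> \<le> \<bar>a - b\<bar>" by (auto simp: tr_def)
lemma tr_idem: "N \<ge> 0 \<Longrightarrow> tr N (tr N a) = tr N a" by (auto simp: tr_def)
lemma tr_bound: "N \<ge> 0 \<Longrightarrow> \<bar>tr N a\<bar> \<le> N" by (auto simp: tr_def)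
lemma tr_cont: "continuous_on UNIV (tr N)" unfolding tr_def by (intro continuous_intros)
lemma tr_meas[measurable]: "tr N \<in> borel_measurable borel"
  using tr_cont by (rule borel_measurable_continuous_onI)
lemma tr_id: "\<bar>a\<bar> \<le> N \<Longrightarrow> tr N a = a" by (auto simp: tr_def)

lemma L2_density:
  fixes M :: "'a::polish_space measure" and f :: "'a \<Rightarrow> real"
  assumes P: "prob_space M" and S: "sets M = sets borel" and f: "f \<in> borel_measurable M"
    and f2: "integrable M (\<lambda>x. (f x)\<^sup>2)" and e: "e > 0"
  shows "\<exists>g. bc g \<and> (\<integral>x. (f x - g x)\<^sup>2 \<partial>M) < e"
proof -
  interpret prob_space M by fact
  have fm: "finite_measure M" by unfold_locales
  have conv: "(\<lambda>N::nat. \<integral>x. (f x - tr (real N) (f x))\<^sup>2 \<partial>M) \<longlonglongrightarrow> (\<integral>x. 0 \<partial>M)"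
  proof (rule integral_dominated_convergence[where w="\<lambda>x. (f x)\<^sup>2"])
    show "(\<lambda>x. 0::real) \<in> borel_measurable M" by simp
    show "(\<lambda>x. (f x - tr (real N) (f x))\<^sup>2) \<in> borel_measurable M" for N using f by measurable
    show "integrable M (\<lambda>x. (f x)\<^sup>2)" by fact
    show "AE x in M. (\<lambda>N. (f x - tr (real N) (f x))\<^sup>2) \<longlonglongrightarrow> 0"
    proof (rule AE_I2)
      fix x
      obtain N0 :: nat where "\<bar>f x\<bar> \<le> real N0" using real_arch_simple by blast
      then have "\<forall>\<^sub>F N in sequentially. (f x - tr (real N) (f x))\<^sup>2 = 0"
        by (auto simp: eventually_sequentially tr_id intro!: exI[of _ N0])
      then show "(\<lambda>N. (f x - tr (real N) (f x))\<^sup>2) \<longlonglongrightarrow> 0"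
        by (rule tendsto_eventually)
    qed
    show "AE x in M. norm ((f x - tr (real N) (f x))\<^sup>2) \<le> (f x)\<^sup>2" for N
    proof (rule AE_I2)
      fix x
      have "\<bar>f x - tr (real N) (f x)\<bar> \<le> \<bar>f x\<bar>" by (auto simp: tr_def)
      then show "norm ((f x - tr (real N) (f x))\<^sup>2) \<le> (f x)\<^sup>2"
        by (simp add: abs_le_square_iff)
    qed
  qed
  from conv have c0: "(\<lambda>N::nat. \<integral>x. (f x - tr (real N) (f x))\<^sup>2 \<partial>M) \<longlonglongrightarrow> 0" by simp
  have "\<forall>\<^sub>F N in sequentially. (\<integral>x. (f x - tr (real N) (f x))\<^sup>2 \<partial>M) < e/4"
    by (rule order_tendstoD(2)[OF c0]) (use e in simp)
  then obtain N :: nat where N: "(\<integral>x. (f x - tr (real N) (f x))\<^sup>2 \<partial>M) < e/4"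
    by (auto simp: eventually_sequentially)
  define fN where "fN x = tr (real N) (f x)" for x
  have fNm: "fN \<in> borel_measurable M" unfolding fN_def using f by measurable
  have fNb: "\<bar>fN x\<bar> \<le> real N" for x unfolding fN_def by (rule tr_bound) simp
  have fNi: "integrable M fN"
    using fNm fNb by (intro integrable_const_bound[where B="real N"]) auto
  define e' where "e' = e / (8 * (real N + 1))"
  have e': "e' > 0" using e by (simp add: e'_def)
  obtain g where g: "bc g" "(\<integral>x. \<bar>fN x - g x\<bar> \<partial>M) < e'"
    using L1_density[OF P S fNi] e' by auto
  define g' where "g' x = tr (real N) (g x)" for x
  have bcg': "bc g'"
    unfolding bc_def g'_def
  proof
    show "continuous_on UNIV (\<lambda>x. tr (real N) (g x))"
      using g(1) tr_cont unfolding bc_def by (auto intro: continuous_on_compose2)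
    show "\<exists>B. \<forall>x. \<bar>tr (real N) (g x)\<bar> \<le> B" by (intro exI[of _ "real N"] allI tr_bound) simp
  qed
  have gm: "g \<in> borel_measurable M" using bc_measurable[OF g(1) S] .
  have g'm: "g' \<in> borel_measurable M" unfolding g'_def using gm by measurable
  have g'b: "\<bar>g' x\<bar> \<le> real N" for x unfolding g'_def by (rule tr_bound) simp
  have pw: "(f x - g' x)\<^sup>2 \<le> 2 * (f x - fN x)\<^sup>2 + 4 * real N * \<bar>fN x - g x\<bar>" for x
  proof -
    have a: "\<bar>fN x - g' x\<bar> \<le> \<bar>fN x - g x\<bar>"
      using tr_lip[of "real N" "fN x" "g x"] tr_idem[of "real N" "f x"] unfolding fN_def g'_def by simp
    have b: "\<bar>fN x - g' x\<bar> \<le> 2 * real N" using fNb[of x] g'b[of x] by linarith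
    have "(fN x - g' x)\<^sup>2 = \<bar>fN x - g' x\<bar> * \<bar>fN x - g' x\<bar>" by (simp add: power2_eq_square)
    also have "\<dots> \<le> (2 * real N) * \<bar>fN x - g x\<bar>"
      using a b by (intro mult_mono) auto
    finally have c: "(fN x - g' x)\<^sup>2 \<le> 2 * real N * \<bar>fN x - g x\<bar>" .
    have "(f x - g' x)\<^sup>2 \<le> 2 * (f x - fN x)\<^sup>2 + 2 * (fN x - g' x)\<^sup>2"
      using sq_bound_aux[of "f x - fN x" "g' x - fN x"] power2_commute[of "g' x" "fN x"] by simp
    then show ?thesis using c by linarith
  qed
  have i1: "integrable M (\<lambda>x. (f x - fN x)\<^sup>2)"
    using sq_int[OF fm f f2 fNm fNb] .
  have i2: "integrable M (\<lambda>x. \<bar>fN x - g x\<bar>)"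
    using fNi bc_integrable[OF g(1) S fm] by auto
  have "(\<integral>x. (f x - g' x)\<^sup>2 \<partial>M) \<le> (\<integral>x. 2 * (f x - fN x)\<^sup>2 + 4 * real N * \<bar>fN x - g x\<bar> \<partial>M)"
    using pw i1 i2 sq_int[OF fm f f2 g'm g'b] by (intro integral_mono) auto
  also have "\<dots> = 2 * (\<integral>x. (f x - fN x)\<^sup>2 \<partial>M) + 4 * real N * (\<integral>x. \<bar>fN x - g x\<bar> \<partial>M)"
    using i1 i2 by simp
  also have "\<dots> < e"
  proof -
    have "(\<integral>x. (f x - fN x)\<^sup>2 \<partial>M) < e/4" using N by (simp add: fN_def)
    moreover have "4 * real N * (\<integral>x. \<bar>fN x - g x\<bar> \<partial>M) \<le> 4 * real N * e'"
      using g(2) by (intro mult_left_mono) auto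
    moreover have "4 * real N * e' \<le> e / 2"
      using e by (simp add: e'_def field_simps)
    ultimately show ?thesis by linarith
  qed
  finally show ?thesis using bcg' by (intro exI[of _ g'] conjI)
qed

lemma meas_borel: "sets M = sets borel \<Longrightarrow> f \<in> borel_measurable borel \<Longrightarrow> f \<in> measurable M borel"
  using measurable_cong_sets[of M borel borel borel] by simp

lemma bc_bounded: "bc g \<Longrightarrow> bounded (range g)"
  unfolding bc_def bounded_real by auto

lemma wc_conv:
  assumes "weak_conv_filter M N F" "bc g"
  shows "((\<lambda>i. \<integral>x. g x \<partial>M i) \<longlongrightarrow> (\<integral>x. g x \<partial>N)) F"
  using assms unfolding weak_conv_filter_def using bc_bounded[OF assms(2)] bc_def by blast

lemma bc_prod: assumes "bc g1" "bc g2" shows "bc (\<lambda>x. g1 x * g2 x)"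
proof -
  obtain B1 where B1: "\<forall>x. \<bar>g1 x\<bar> \<le> B1" and c1: "continuous_on UNIV g1" using assms by (auto simp: bc_def)
  obtain B2 where B2: "\<forall>x. \<bar>g2 x\<bar> \<le> B2" and c2: "continuous_on UNIV g2" using assms by (auto simp: bc_def)
  have "\<bar>g1 x * g2 x\<bar> \<le> B1 * B2" for x
    using B1 B2 by (simp add: abs_mult mult_mono')
  then show ?thesis using c1 c2 unfolding bc_def by (auto intro!: continuous_intros)
qed

lemma bc_const: "bc (\<lambda>x. a)"
  unfolding bc_def by auto

lemma rn_facts:
  fixes M N :: "'a::polish_space measure"
  assumes PM: "prob_space M" and PN: "prob_space N" and SM: "sets M = sets borel" and SN: "sets N = sets borel"
    and ac: "absolutely_continuous M N"
  shows rn_meas: "(\<lambda>x. enn2real (RN_deriv M N x)) \<in> borel_measurable borel"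
    and rn_int: "\<And>f::'a \<Rightarrow> real. f \<in> borel_measurable borel \<Longrightarrow>
        integral\<^sup>L N f = (\<integral>x. enn2real (RN_deriv M N x) * f x \<partial>M)"
    and rn_intble: "\<And>f::'a \<Rightarrow> real. f \<in> borel_measurable borel \<Longrightarrow>
        integrable N f \<longleftrightarrow> integrable M (\<lambda>x. enn2real (RN_deriv M N x) * f x)"
    and rn_sq: "(\<integral>\<^sup>+x. (RN_deriv M N x)\<^sup>2 \<partial>M) = (\<integral>\<^sup>+x. ennreal ((enn2real (RN_deriv M N x))\<^sup>2) \<partial>M)"
proof -
  interpret prob_space M by fact
  have sfN: "sigma_finite_measure N" using PN by (simp add: prob_space_imp_sigma_finite)
  have SNM: "sets N = sets M" using SM SN by simp
  have m: "RN_deriv M N \<in> borel_measurable borel"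
    using borel_measurable_RN_deriv[of M N] unfolding measurable_cong_sets[OF SM refl] .
  then show "(\<lambda>x. enn2real (RN_deriv M N x)) \<in> borel_measurable borel" by measurable
  show "integral\<^sup>L N f = (\<integral>x. enn2real (RN_deriv M N x) * f x \<partial>M)"
    if "f \<in> borel_measurable borel" for f :: "'a \<Rightarrow> real"
  proof -
    have "f \<in> borel_measurable M" using meas_borel[OF SM that] .
    then show ?thesis using RN_deriv_integral[OF sfN ac SNM] by simp
  qed
  show "integrable N f \<longleftrightarrow> integrable M (\<lambda>x. enn2real (RN_deriv M N x) * f x)"
    if "f \<in> borel_measurable borel" for f :: "'a \<Rightarrow> real"
  proof -
    have "f \<in> borel_measurable M" using meas_borel[OF SM that] .
    then show ?thesis using RN_deriv_integrable[OF sfN ac SNM] by simp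
  qed
  have fin: "AE x in M. RN_deriv M N x \<noteq> \<infinity>" using RN_deriv_finite[OF sfN ac SNM] .
  show "(\<integral>\<^sup>+x. (RN_deriv M N x)\<^sup>2 \<partial>M) = (\<integral>\<^sup>+x. ennreal ((enn2real (RN_deriv M N x))\<^sup>2) \<partial>M)"
  proof (rule nn_integral_cong_AE)
    show "AE x in M. (RN_deriv M N x)\<^sup>2 = ennreal ((enn2real (RN_deriv M N x))\<^sup>2)"
      using fin by eventually_elim (simp add: ennreal_power[symmetric] less_top)
  qed
qed

lemma sq_fin:
  fixes f :: "'a \<Rightarrow> real"
  assumes "f \<in> borel_measurable M" "(\<integral>\<^sup>+x. ennreal ((f x)\<^sup>2) \<partial>M) < \<infinity>"
  shows "integrable M (\<lambda>x. (f x)\<^sup>2)" "(\<integral>\<^sup>+x. ennreal ((f x)\<^sup>2) \<partial>M) = ennreal (\<integral>x. (f x)\<^sup>2 \<partial>M)"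
proof -
  show i: "integrable M (\<lambda>x. (f x)\<^sup>2)" using assms by (simp add: integrable_iff_bounded)
  show "(\<integral>\<^sup>+x. ennreal ((f x)\<^sup>2) \<partial>M) = ennreal (\<integral>x. (f x)\<^sup>2 \<partial>M)"
    using nn_integral_eq_integral[OF i] by simp
qed

lemma pw_ineq:
  fixes a g t :: real
  assumes "0 \<le> g" "g \<le> 1" "t > 0"
  shows "a * g \<le> t * g + a\<^sup>2 / (4 * t)"
proof -
  have "0 \<le> (2*t*g - a)\<^sup>2" by simp
  also have "(2*t*g - a)\<^sup>2 = 4*t*t*(g*g) - 4*t*(a*g) + a\<^sup>2" by (simp add: power2_eq_square algebra_simps)
  finally have 1: "4*t*(a*g) \<le> 4*t*t*(g*g) + a\<^sup>2" by linarith
  have "g * g \<le> g * 1" using assms by (intro mult_left_mono) auto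
  then have "4*t*t*(g*g) \<le> 4*t*t*g" using assms by (intro mult_left_mono) auto
  with 1 have 2: "4*t*(a*g) \<le> 4*t*(t*g) + a\<^sup>2" by (simp add: algebra_simps)
  have "a * g = (4*t*(a*g)) / (4*t)" using assms by simp
  also have "\<dots> \<le> (4*t*(t*g) + a\<^sup>2) / (4*t)" using 2 assms by (intro divide_right_mono) auto
  also have "\<dots> = t * g + a\<^sup>2 / (4 * t)" using assms by (simp add: add_divide_distrib)
  finally show ?thesis .
qed

locale setting =
  fixes P0 P1 :: "real \<Rightarrow> 'a::polish_space measure"
    and p0 p1 :: "'a measure"
    and c :: real
  assumes P0_prob: "\<And>l. l > 0 \<Longrightarrow> prob_space (P0 l)"
    and P1_prob: "\<And>l. l > 0 \<Longrightarrow> prob_space (P1 l)"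
    and P0_sets: "\<And>l. l > 0 \<Longrightarrow> sets (P0 l) = sets borel"
    and P1_sets: "\<And>l. l > 0 \<Longrightarrow> sets (P1 l) = sets borel"
    and ac: "\<And>l. l > 0 \<Longrightarrow> absolutely_continuous (P0 l) (P1 l)"
    and p0_prob: "prob_space p0" and p1_prob: "prob_space p1"
    and p0_sets: "sets p0 = sets borel" and p1_sets: "sets p1 = sets borel"
    and conv0: "weak_conv_filter P0 p0 at_top"
    and conv1: "weak_conv_filter P1 p1 at_top"
    and c_pos: "c > 0"
    and bound: "\<And>l. l > 0 \<Longrightarrow> (\<integral>\<^sup>+ x. (RN_deriv (P0 l) (P1 l) x)\<^sup>2 \<partial>P0 l) \<le> ennreal c"
begin

definition lr where "lr l x = enn2real (RN_deriv (P0 l) (P1 l) x)"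

lemma lr_facts:
  assumes l: "l > 0"
  shows lr_meas: "lr l \<in> borel_measurable borel"
    and lr_nonneg: "\<And>x. lr l x \<ge> 0"
    and lr_sq_int: "integrable (P0 l) (\<lambda>x. (lr l x)\<^sup>2)"
    and lr_sq_le: "(\<integral>x. (lr l x)\<^sup>2 \<partial>P0 l) \<le> c"
    and lr_int: "\<And>f. f \<in> borel_measurable borel \<Longrightarrow> integral\<^sup>L (P1 l) f = (\<integral>x. lr l x * f x \<partial>P0 l)"
    and lr_intble: "\<And>f. f \<in> borel_measurable borel \<Longrightarrow>
        integrable (P1 l) f \<longleftrightarrow> integrable (P0 l) (\<lambda>x. lr l x * f x)"
    and lr_sq: "(\<integral>\<^sup>+ x. (RN_deriv (P0 l) (P1 l) x)\<^sup>2 \<partial>P0 l) = ennreal (\<integral>x. (lr l x)\<^sup>2 \<partial>P0 l)"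
proof -
  note R = rn_facts[OF P0_prob[OF l] P1_prob[OF l] P0_sets[OF l] P1_sets[OF l] ac[OF l]]
  show m: "lr l \<in> borel_measurable borel" using R(1) unfolding lr_def[abs_def] .
  show "lr l x \<ge> 0" for x by (simp add: lr_def)
  have m0: "lr l \<in> borel_measurable (P0 l)" using meas_borel[OF P0_sets[OF l] m] .
  have "(\<integral>\<^sup>+x. ennreal ((lr l x)\<^sup>2) \<partial>P0 l) < \<infinity>"
    using R(4) bound[OF l] by (simp add: lr_def[abs_def] le_less_trans)
  note S = sq_fin[OF m0 this]
  show "integrable (P0 l) (\<lambda>x. (lr l x)\<^sup>2)" by (rule S(1))
  show eq: "(\<integral>\<^sup>+ x. (RN_deriv (P0 l) (P1 l) x)\<^sup>2 \<partial>P0 l) = ennreal (\<integral>x. (lr l x)\<^sup>2 \<partial>P0 l)"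
    using R(4) S(2) by (simp add: lr_def[abs_def])
  show "(\<integral>x. (lr l x)\<^sup>2 \<partial>P0 l) \<le> c"
    using bound[OF l] c_pos unfolding eq by (simp add: ennreal_le_iff)
  show "integral\<^sup>L (P1 l) f = (\<integral>x. lr l x * f x \<partial>P0 l)" if "f \<in> borel_measurable borel" for f
    using R(2)[OF that] by (simp add: lr_def)
  show "integrable (P1 l) f \<longleftrightarrow> integrable (P0 l) (\<lambda>x. lr l x * f x)" if "f \<in> borel_measurable borel" for f
    using R(3)[OF that] by (simp add: lr_def)
qed

lemma ineq:
  assumes g: "bc g" "\<And>x. 0 \<le> g x" "\<And>x. g x \<le> 1" and t: "t > 0"
  shows "(\<integral>x. g x \<partial>p1) \<le> t * (\<integral>x. g x \<partial>p0) + c / (4 * t)"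
proof -
  have gm: "g \<in> borel_measurable borel" using bc_measurable[OF g(1) refl] .
  have ev: "\<forall>\<^sub>F l in at_top. (\<integral>x. g x \<partial>P1 l) \<le> t * (\<integral>x. g x \<partial>P0 l) + c / (4 * t)"
    using eventually_gt_at_top[of 0]
  proof eventually_elim
    case (elim l)
    interpret P0: prob_space "P0 l" using P0_prob[OF elim] .
    interpret P1: prob_space "P1 l" using P1_prob[OF elim] .
    have fm0: "finite_measure (P0 l)" by unfold_locales
    have fm1: "finite_measure (P1 l)" by unfold_locales
    have ig0: "integrable (P0 l) g" using bc_integrable[OF g(1) P0_sets[OF elim] fm0] .
    have ig1: "integrable (P1 l) g" using bc_integrable[OF g(1) P1_sets[OF elim] fm1] .
    have i1: "integrable (P0 l) (\<lambda>x. lr l x * g x)" using ig1 lr_intble[OF elim gm] by simp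
    have i2: "integrable (P0 l) (\<lambda>x. (lr l x)\<^sup>2)" using lr_sq_int[OF elim] .
    have "(\<integral>x. g x \<partial>P1 l) = (\<integral>x. lr l x * g x \<partial>P0 l)" by (rule lr_int[OF elim gm])
    also have "\<dots> \<le> (\<integral>x. t * g x + (lr l x)\<^sup>2 / (4 * t) \<partial>P0 l)"
      using i1 i2 ig0 pw_ineq[OF g(2,3) t] by (intro integral_mono) auto
    also have "\<dots> = t * (\<integral>x. g x \<partial>P0 l) + (\<integral>x. (lr l x)\<^sup>2 \<partial>P0 l) / (4 * t)"
      using i2 ig0 by simp
    also have "\<dots> \<le> t * (\<integral>x. g x \<partial>P0 l) + c / (4 * t)"
      using lr_sq_le[OF elim] t by (simp add: divide_right_mono)
    finally show ?case .
  qed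
  have bg: "bounded (range g)" using bc_bounded[OF g(1)] .
  have lim1: "((\<lambda>l. \<integral>x. g x \<partial>P1 l) \<longlongrightarrow> (\<integral>x. g x \<partial>p1)) at_top"
    using wc_conv[OF conv1 g(1)] .
  have lim2: "((\<lambda>l. t * (\<integral>x. g x \<partial>P0 l) + c / (4 * t)) \<longlongrightarrow> t * (\<integral>x. g x \<partial>p0) + c / (4 * t)) at_top"
    using wc_conv[OF conv0 g(1)] by (intro tendsto_intros)
  show ?thesis using tendsto_le[OF trivial_limit_at_top_linorder lim2 lim1 ev] .
qed

lemma abs_cont: "absolutely_continuous p0 p1"
  unfolding absolutely_continuous_def
proof
  fix A assume A: "A \<in> null_sets p0"
  interpret q0: prob_space p0 by (rule p0_prob)
  interpret q1: prob_space p1 by (rule p1_prob)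
  have fm0: "finite_measure p0" by unfold_locales
  have fm1: "finite_measure p1" by unfold_locales
  have Ab: "A \<in> sets borel" using A p0_sets by (auto simp: null_sets_def)
  have sp0: "space p0 = UNIV" using sets_eq_imp_space_eq[OF p0_sets] by simp
  have sp1: "space p1 = UNIV" using sets_eq_imp_space_eq[OF p1_sets] by simp
  have m0: "measure p0 A = 0" using A by (simp add: null_sets_def measure_def)
  have key: "measure p1 A \<le> c / (4 * t) + (1 + t) * e" if t: "t > 0" and e: "e > 0" for t e
  proof -
    obtain K where K: "compact K" "K \<subseteq> A" "measure p1 A < measure p1 K + e"
      using inner_approx[OF fm1 p1_sets Ab e] by blast
    obtain U where U: "open U" "A \<subseteq> U" "measure p0 U < measure p0 A + e"
      using outer_approx[OF fm0 p0_sets Ab e] by blast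
    have KU: "K \<subseteq> U" using K U by auto
    obtain g :: "'a \<Rightarrow> real" where g: "continuous_on UNIV g" "\<And>x. 0 \<le> g x" "\<And>x. g x \<le> 1"
      "\<And>x. x \<in> K \<Longrightarrow> g x = 1" "\<And>x. x \<notin> U \<Longrightarrow> g x = 0"
      by (fact sep_fun[OF K(1) U(1) KU])
    have bcg: "bc g" unfolding bc_def using g by (intro conjI exI[of _ 1]) auto
    have Ks: "K \<in> sets borel" using K(1) by (simp add: compact_imp_closed borel_closed)
    have Us: "U \<in> sets borel" using U(1) by (simp add: borel_open)
    have "measure p1 K = (\<integral>x. indicator K x \<partial>p1)" using sp1 by simp
    also have "\<dots> \<le> (\<integral>x. g x \<partial>p1)"
    proof (rule integral_mono)
      show "integrable p1 (indicator K :: 'a \<Rightarrow> real)"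
        using Ks p1_sets by (intro integrable_real_indicator) (simp_all add: less_top[symmetric])
      show "integrable p1 g" using bc_integrable[OF bcg p1_sets fm1] .
      show "indicator K x \<le> g x" for x using g(2,4)[of x] by (auto simp: indicator_def)
    qed
    also have "\<dots> \<le> t * (\<integral>x. g x \<partial>p0) + c / (4 * t)" by (rule ineq[OF bcg g(2,3) t])
    also have "(\<integral>x. g x \<partial>p0) \<le> (\<integral>x. indicator U x \<partial>p0)"
    proof (rule integral_mono)
      show "integrable p0 (indicator U :: 'a \<Rightarrow> real)"
        using Us p0_sets by (intro integrable_real_indicator) (simp_all add: less_top[symmetric])
      show "integrable p0 g" using bc_integrable[OF bcg p0_sets fm0] .
      show "g x \<le> indicator U x" for x using g(3,5)[of x] by (auto simp: indicator_def)
    qed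
    also have "(\<integral>x. indicator U x \<partial>p0) = measure p0 U" using sp0 by simp
    finally have "measure p1 K \<le> t * measure p0 U + c / (4 * t)" using t by simp
    moreover have "t * measure p0 U \<le> t * e" using U(3) m0 t by simp
    ultimately show ?thesis using K(3) by (simp add: algebra_simps)
  qed
  have key2: "measure p1 A \<le> c / (4 * t)" if t: "t > 0" for t
  proof (rule field_le_epsilon)
    fix e :: real assume e: "e > 0"
    have "measure p1 A \<le> c / (4 * t) + (1 + t) * (e / (1 + t))"
      using key[OF t, of "e / (1 + t)"] e t by simp
    then show "measure p1 A \<le> c / (4 * t) + e" using t by simp
  qed
  have "measure p1 A \<le> 0"
  proof (rule ccontr)
    assume "\<not> measure p1 A \<le> 0"
    then have mpos: "measure p1 A > 0" by simp
    define t where "t = c / (2 * measure p1 A)"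
    have t: "t > 0" using mpos c_pos by (simp add: t_def)
    have "c / (4 * t) = measure p1 A / 2" using mpos c_pos by (simp add: t_def field_simps)
    with key2[OF t] mpos show False by simp
  qed
  then have "measure p1 A = 0" by (simp add: antisym)
  then have "emeasure p1 A = 0" using Ab p1_sets by (simp add: q1.emeasure_eq_measure)
  then show "A \<in> null_sets p1" using Ab p1_sets by (simp add: null_sets_def)
qed

end

lemma abs_int_le:
  fixes u w :: "'a \<Rightarrow> real"
  assumes "integrable M u" "integrable M w" "\<And>x. \<bar>u x\<bar> \<le> w x"
  shows "\<bar>\<integral>x. u x \<partial>M\<bar> \<le> (\<integral>x. w x \<partial>M)"
proof -
  have a: "u x \<le> w x" for x using assms(3)[of x] by (simp add: abs_le_iff)
  have b: "- w x \<le> u x" for x using assms(3)[of x] by (simp add: abs_le_iff)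
  have "(\<integral>x. u x \<partial>M) \<le> (\<integral>x. w x \<partial>M)"
    using assms(1,2) a by (intro integral_mono) auto
  moreover have "(\<integral>x. - w x \<partial>M) \<le> (\<integral>x. u x \<partial>M)"
    using assms(1,2) b by (intro integral_mono) auto
  ultimately show ?thesis by (simp add: abs_le_iff)
qed

lemma abs_le_delta: "d > 0 \<Longrightarrow> \<bar>x::real\<bar> \<le> d + x\<^sup>2 / d"
proof (cases "\<bar>x\<bar> \<le> d")
  case True
  assume "d > 0" then show ?thesis using True by (simp add: add_increasing2)
next
  case False
  assume d: "d > 0"
  have "\<bar>x\<bar> * d \<le> \<bar>x\<bar> * \<bar>x\<bar>" using False d by (intro mult_left_mono) auto
  then have "\<bar>x\<bar> \<le> x\<^sup>2 / d" using d by (simp add: field_simps power2_eq_square abs_mult[symmetric])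
  then show ?thesis using d by simp
qed

lemma lip_est:
  fixes M :: "'a measure" and f g :: "'a \<Rightarrow> real" and h :: "real \<Rightarrow> real"
  assumes P: "prob_space M" and fm: "f \<in> borel_measurable M" and gm: "g \<in> borel_measurable M"
    and i2: "integrable M (\<lambda>x. (f x - g x)\<^sup>2)"
    and hm: "h \<in> borel_measurable borel" and hb: "\<And>y. \<bar>h y\<bar> \<le> 1"
    and hl: "\<And>a b. \<bar>h a - h b\<bar> \<le> K * \<bar>a - b\<bar>" and K: "K \<ge> 0" and d: "d > 0"
  shows "\<bar>(\<integral>x. h (f x) \<partial>M) - (\<integral>x. h (g x) \<partial>M)\<bar> \<le> K * d + K * (\<integral>x. (f x - g x)\<^sup>2 \<partial>M) / d"
proof -
  interpret prob_space M by fact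
  have ihf: "integrable M (\<lambda>x. h (f x))"
    using fm hm hb by (intro integrable_const_bound[where B=1]) auto
  have ihg: "integrable M (\<lambda>x. h (g x))"
    using gm hm hb by (intro integrable_const_bound[where B=1]) auto
  have "\<bar>(\<integral>x. h (f x) \<partial>M) - (\<integral>x. h (g x) \<partial>M)\<bar> = \<bar>\<integral>x. h (f x) - h (g x) \<partial>M\<bar>"
    using ihf ihg by simp
  also have "\<dots> \<le> (\<integral>x. K * d + K * (f x - g x)\<^sup>2 / d \<partial>M)"
  proof (rule abs_int_le)
    show "integrable M (\<lambda>x. h (f x) - h (g x))" using ihf ihg by simp
    show "integrable M (\<lambda>x. K * d + K * (f x - g x)\<^sup>2 / d)" using i2 by simp
    fix x
    have "\<bar>h (f x) - h (g x)\<bar> \<le> K * \<bar>f x - g x\<bar>" by (rule hl)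
    also have "\<dots> \<le> K * (d + (f x - g x)\<^sup>2 / d)" using K abs_le_delta[OF d] by (intro mult_left_mono) auto
    finally show "\<bar>h (f x) - h (g x)\<bar> \<le> K * d + K * (f x - g x)\<^sup>2 / d"
      by (simp add: algebra_simps)
  qed
  also have "\<dots> = K * d + K * (\<integral>x. (f x - g x)\<^sup>2 \<partial>M) / d"
    using i2 prob_space.prob_space[OF P] by simp
  finally show ?thesis .
qed

lemma expand:
  fixes M N :: "'a::topological_space measure" and l g :: "'a \<Rightarrow> real"
  assumes PM: "prob_space M" and PN: "prob_space N" and SM: "sets M = sets borel" and SN: "sets N = sets borel"
    and lm: "l \<in> borel_measurable borel" and l2: "integrable M (\<lambda>x. (l x)\<^sup>2)"
    and lint: "\<And>f. f \<in> borel_measurable borel \<Longrightarrow> integral\<^sup>L N f = (\<integral>x. l x * f x \<partial>M)"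
    and lintble: "\<And>f. f \<in> borel_measurable borel \<Longrightarrow> integrable N f \<longleftrightarrow> integrable M (\<lambda>x. l x * f x)"
    and g: "bc g"
  shows "(\<integral>x. (l x - g x)\<^sup>2 \<partial>M) = (\<integral>x. (l x)\<^sup>2 \<partial>M) - 2 * (\<integral>x. g x \<partial>N) + (\<integral>x. (g x)\<^sup>2 \<partial>M)"
proof -
  interpret M: prob_space M by fact
  interpret N: prob_space N by fact
  have fmM: "finite_measure M" by unfold_locales
  have fmN: "finite_measure N" by unfold_locales
  have gm: "g \<in> borel_measurable borel" using bc_measurable[OF g refl] .
  have i1: "integrable M (\<lambda>x. l x * g x)" using lintble[OF gm] bc_integrable[OF g SN fmN] by simp
  have bcg2: "bc (\<lambda>x. g x * g x)" using bc_prod[OF g g] .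
  have i3: "integrable M (\<lambda>x. (g x)\<^sup>2)"
    using bc_integrable[OF bcg2 SM fmM] by (simp add: power2_eq_square)
  have "(\<integral>x. (l x - g x)\<^sup>2 \<partial>M) = (\<integral>x. (l x)\<^sup>2 - 2 * (l x * g x) + (g x)\<^sup>2 \<partial>M)"
    by (intro Bochner_Integration.integral_cong refl) (simp add: power2_diff)
  also have "\<dots> = (\<integral>x. (l x)\<^sup>2 \<partial>M) - 2 * (\<integral>x. l x * g x \<partial>M) + (\<integral>x. (g x)\<^sup>2 \<partial>M)"
    using l2 i1 i3 by simp
  also have "(\<integral>x. l x * g x \<partial>M) = (\<integral>x. g x \<partial>N)" using lint[OF gm] by simp
  finally show ?thesis .
qed

locale setting2 = setting +
  assumes SQ: "((\<lambda>l. \<integral>\<^sup>+ x. (RN_deriv (P0 l) (P1 l) x)\<^sup>2 \<partial>P0 l)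
        \<longlongrightarrow> (\<integral>\<^sup>+ x. (RN_deriv p0 p1 x)\<^sup>2 \<partial>p0)) at_top"
begin

definition lr0 where "lr0 x = enn2real (RN_deriv p0 p1 x)"

lemma lr0_facts:
  shows lr0_meas: "lr0 \<in> borel_measurable borel"
    and lr0_nonneg: "\<And>x. lr0 x \<ge> 0"
    and lr0_sq_int: "integrable p0 (\<lambda>x. (lr0 x)\<^sup>2)"
    and lr0_sq_le: "(\<integral>x. (lr0 x)\<^sup>2 \<partial>p0) \<le> c"
    and lr0_int: "\<And>f. f \<in> borel_measurable borel \<Longrightarrow> integral\<^sup>L p1 f = (\<integral>x. lr0 x * f x \<partial>p0)"
    and lr0_intble: "\<And>f. f \<in> borel_measurable borel \<Longrightarrow>
        integrable p1 f \<longleftrightarrow> integrable p0 (\<lambda>x. lr0 x * f x)"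
    and sq_conv: "((\<lambda>l. \<integral>x. (lr l x)\<^sup>2 \<partial>P0 l) \<longlongrightarrow> (\<integral>x. (lr0 x)\<^sup>2 \<partial>p0)) at_top"
proof -
  note R = rn_facts[OF p0_prob p1_prob p0_sets p1_sets abs_cont]
  show m: "lr0 \<in> borel_measurable borel" using R(1) unfolding lr0_def[abs_def] .
  show "lr0 x \<ge> 0" for x by (simp add: lr0_def)
  have m0: "lr0 \<in> borel_measurable p0" using meas_borel[OF p0_sets m] .
  have ev: "\<forall>\<^sub>F l in at_top. (\<integral>\<^sup>+ x. (RN_deriv (P0 l) (P1 l) x)\<^sup>2 \<partial>P0 l) \<le> ennreal c"
    using eventually_gt_at_top[of 0] by eventually_elim (rule bound)
  have Ale: "(\<integral>\<^sup>+ x. (RN_deriv p0 p1 x)\<^sup>2 \<partial>p0) \<le> ennreal c"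
    using tendsto_le[OF trivial_limit_at_top_linorder tendsto_const SQ ev] .
  have "(\<integral>\<^sup>+x. ennreal ((lr0 x)\<^sup>2) \<partial>p0) < \<infinity>"
    using R(4) Ale by (simp add: lr0_def[abs_def] le_less_trans)
  note S = sq_fin[OF m0 this]
  show "integrable p0 (\<lambda>x. (lr0 x)\<^sup>2)" by (rule S(1))
  have eq: "(\<integral>\<^sup>+ x. (RN_deriv p0 p1 x)\<^sup>2 \<partial>p0) = ennreal (\<integral>x. (lr0 x)\<^sup>2 \<partial>p0)"
    using R(4) S(2) by (simp add: lr0_def[abs_def])
  show "(\<integral>x. (lr0 x)\<^sup>2 \<partial>p0) \<le> c"
    using Ale c_pos unfolding eq by (simp add: ennreal_le_iff)
  show "integral\<^sup>L p1 f = (\<integral>x. lr0 x * f x \<partial>p0)" if "f \<in> borel_measurable borel" for f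
    using R(2)[OF that] by (simp add: lr0_def)
  show "integrable p1 f \<longleftrightarrow> integrable p0 (\<lambda>x. lr0 x * f x)" if "f \<in> borel_measurable borel" for f
    using R(3)[OF that] by (simp add: lr0_def)
  have ev2: "\<forall>\<^sub>F l in at_top. ennreal (\<integral>x. (lr l x)\<^sup>2 \<partial>P0 l) = (\<integral>\<^sup>+ x. (RN_deriv (P0 l) (P1 l) x)\<^sup>2 \<partial>P0 l)"
    using eventually_gt_at_top[of 0] by eventually_elim (rule lr_sq[symmetric])
  have "((\<lambda>l. ennreal (\<integral>x. (lr l x)\<^sup>2 \<partial>P0 l)) \<longlongrightarrow> ennreal (\<integral>x. (lr0 x)\<^sup>2 \<partial>p0)) at_top"
    using SQ unfolding eq tendsto_cong[OF ev2] .
  then show "((\<lambda>l. \<integral>x. (lr l x)\<^sup>2 \<partial>P0 l) \<longlongrightarrow> (\<integral>x. (lr0 x)\<^sup>2 \<partial>p0)) at_top"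
    by (subst (asm) tendsto_ennreal_iff) (auto intro!: always_eventually)
qed

lemma D_conv:
  assumes g: "bc g"
  shows "((\<lambda>l. \<integral>x. (lr l x - g x)\<^sup>2 \<partial>P0 l) \<longlongrightarrow> (\<integral>x. (lr0 x - g x)\<^sup>2 \<partial>p0)) at_top"
proof -
  have e0: "(\<integral>x. (lr0 x - g x)\<^sup>2 \<partial>p0) = (\<integral>x. (lr0 x)\<^sup>2 \<partial>p0) - 2 * (\<integral>x. g x \<partial>p1) + (\<integral>x. (g x)\<^sup>2 \<partial>p0)"
    by (rule expand[OF p0_prob p1_prob p0_sets p1_sets lr0_meas lr0_sq_int lr0_int lr0_intble g])
  have ev: "\<forall>\<^sub>F l in at_top. (\<integral>x. (lr l x)\<^sup>2 \<partial>P0 l) - 2 * (\<integral>x. g x \<partial>P1 l) + (\<integral>x. (g x)\<^sup>2 \<partial>P0 l)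
      = (\<integral>x. (lr l x - g x)\<^sup>2 \<partial>P0 l)"
    using eventually_gt_at_top[of 0]
  proof eventually_elim
    case (elim l)
    show ?case
      by (rule expand[OF P0_prob[OF elim] P1_prob[OF elim] P0_sets[OF elim] P1_sets[OF elim]
            lr_meas[OF elim] lr_sq_int[OF elim] lr_int[OF elim] lr_intble[OF elim] g, symmetric])
  qed
  have bcg2: "bc (\<lambda>x. (g x)\<^sup>2)" using bc_prod[OF g g] by (simp add: power2_eq_square)
  have "((\<lambda>l. (\<integral>x. (lr l x)\<^sup>2 \<partial>P0 l) - 2 * (\<integral>x. g x \<partial>P1 l) + (\<integral>x. (g x)\<^sup>2 \<partial>P0 l))
      \<longlongrightarrow> (\<integral>x. (lr0 x)\<^sup>2 \<partial>p0) - 2 * (\<integral>x. g x \<partial>p1) + (\<integral>x. (g x)\<^sup>2 \<partial>p0)) at_top"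
    by (intro tendsto_intros sq_conv wc_conv[OF conv1 g] wc_conv[OF conv0 bcg2])
  then show ?thesis unfolding e0 tendsto_cong[OF ev] .
qed

end

lemma cts_alt: "a < b \<Longrightarrow> cts_step a b u = max 0 (min 1 ((b - u) / (b - a)))"
proof -
  assume ab: "a < b"
  show ?thesis
  proof (cases "u \<le> a")
    case True
    then have "1 \<le> (b - u) / (b - a)" using ab by (simp add: le_divide_eq)
    then show ?thesis using True by (simp add: cts_step_def)
  next
    case False
    show ?thesis
    proof (cases "u \<ge> b")
      case True
      then have "(b - u) / (b - a) \<le> 0" using ab by (simp add: divide_le_0_iff)
      then show ?thesis using True False by (simp add: cts_step_def)
    next
      case False2: False
      have "(b - u) / (b - a) \<le> 1" using ab False by (simp add: divide_le_eq)
      moreover have "0 \<le> (b - u) / (b - a)" using ab False2 by simp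
      ultimately show ?thesis using False False2 by (simp add: cts_step_def)
    qed
  qed
qed

lemma cts_lip: "a < b \<Longrightarrow> \<bar>cts_step a b u - cts_step a b v\<bar> \<le> (1 / (b - a)) * \<bar>u - v\<bar>"
proof -
  assume ab: "a < b"
  have clip: "\<bar>max 0 (min 1 p) - max 0 (min 1 q)\<bar> \<le> \<bar>p - q\<bar>" for p q :: real
    by (simp add: max_def min_def abs_if)
  have "\<bar>cts_step a b u - cts_step a b v\<bar> \<le> \<bar>(b - u) / (b - a) - (b - v) / (b - a)\<bar>"
    unfolding cts_alt[OF ab] by (rule clip)
  also have "(b - u) / (b - a) - (b - v) / (b - a) = (v - u) / (b - a)"
    by (simp add: diff_divide_distrib)
  also have "\<bar>(v - u) / (b - a)\<bar> = (1 / (b - a)) * \<bar>u - v\<bar>"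
    using ab by (simp add: abs_minus_commute)
  finally show ?thesis .
qed

lemma cts_bound: "\<bar>cts_step a b u\<bar> \<le> 1"
proof (cases "u \<le> a \<or> b \<le> u")
  case True then show ?thesis by (auto simp: cts_step_def)
next
  case False
  then have ab: "a < b" "a < u" "u < b" by auto
  have "(b - u) / (b - a) \<le> 1" using ab by (simp add: divide_le_eq)
  moreover have "0 \<le> (b - u) / (b - a)" using ab by simp
  ultimately show ?thesis using False by (simp add: cts_step_def)
qed

lemma cts_cont: "a < b \<Longrightarrow> continuous_on UNIV (cts_step a b)"
  by (rule uniformly_continuous_imp_continuous[OF cts_step_uniformly_continuous])

context setting2
begin

lemma lip_conv:
  fixes h :: "real \<Rightarrow> real"
  assumes hc: "continuous_on UNIV h" and hb: "\<And>y. \<bar>h y\<bar> \<le> 1"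
    and hl: "\<And>a b. \<bar>h a - h b\<bar> \<le> K * \<bar>a - b\<bar>" and K: "K > 0"
  shows "((\<lambda>l. \<integral>x. h (lr l x) \<partial>P0 l) \<longlongrightarrow> (\<integral>x. h (lr0 x) \<partial>p0)) at_top"
proof (rule tendstoI)
  fix e :: real assume e: "e > 0"
  define d where "d = e / (8 * K)"
  define \<eta> where "\<eta> = d * e / (4 * K)"
  have d: "d > 0" using e K by (simp add: d_def)
  have \<eta>: "\<eta> > 0" using d e K by (simp add: \<eta>_def)
  have hm: "h \<in> borel_measurable borel" using hc by (rule borel_measurable_continuous_onI)
  have m0: "lr0 \<in> borel_measurable p0" using meas_borel[OF p0_sets lr0_meas] .
  obtain g where g: "bc g" "(\<integral>x. (lr0 x - g x)\<^sup>2 \<partial>p0) < \<eta>"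
    using L2_density[OF p0_prob p0_sets m0 lr0_sq_int \<eta>] by blast
  have hg: "bc (\<lambda>x. h (g x))"
    unfolding bc_def
  proof
    show "continuous_on UNIV (\<lambda>x. h (g x))"
      using g(1) hc unfolding bc_def by (auto intro: continuous_on_compose2)
    show "\<exists>B. \<forall>x. \<bar>h (g x)\<bar> \<le> B" using hb by blast
  qed
  have ev1: "\<forall>\<^sub>F l in at_top. (\<integral>x. (lr l x - g x)\<^sup>2 \<partial>P0 l) < \<eta>"
    using D_conv[OF g(1)] g(2) by (rule order_tendstoD(2))
  have ev2: "\<forall>\<^sub>F l in at_top. dist (\<integral>x. h (g x) \<partial>P0 l) (\<integral>x. h (g x) \<partial>p0) < e / 4"
    using tendstoD[OF wc_conv[OF conv0 hg], of "e / 4"] e by simp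
  have fm0: "finite_measure p0" using p0_prob by (simp add: prob_space_def)
  obtain Bg where Bg: "\<And>x. \<bar>g x\<bar> \<le> Bg" using g(1) unfolding bc_def by blast
  have gm0: "g \<in> borel_measurable p0" using bc_measurable[OF g(1) p0_sets] .
  have est0: "\<bar>(\<integral>x. h (lr0 x) \<partial>p0) - (\<integral>x. h (g x) \<partial>p0)\<bar>
      \<le> K * d + K * (\<integral>x. (lr0 x - g x)\<^sup>2 \<partial>p0) / d"
    by (rule lip_est[OF p0_prob m0 gm0 sq_int[OF fm0 m0 lr0_sq_int gm0 Bg] hm hb hl _ d]) (use K in simp)
  have Kd: "K * d = e / 8" using K by (simp add: d_def)
  have Ke: "K * \<eta> / d = e / 4" using K d by (simp add: \<eta>_def)
  have lt: "K * D / d < e / 4" if "D < \<eta>" for D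
  proof -
    have "K * D / d < K * \<eta> / d" using that K d by (intro divide_strict_right_mono mult_strict_left_mono)
    then show ?thesis using Ke by simp
  qed
  show "\<forall>\<^sub>F l in at_top. dist (\<integral>x. h (lr l x) \<partial>P0 l) (\<integral>x. h (lr0 x) \<partial>p0) < e"
    using ev1 ev2 eventually_gt_at_top[of 0]
  proof eventually_elim
    case (elim l)
    have fml: "finite_measure (P0 l)" using P0_prob[OF elim(3)] by (simp add: prob_space_def)
    have ml: "lr l \<in> borel_measurable (P0 l)" using meas_borel[OF P0_sets[OF elim(3)] lr_meas[OF elim(3)]] .
    have gml: "g \<in> borel_measurable (P0 l)" using bc_measurable[OF g(1) P0_sets[OF elim(3)]] .
    have estl: "\<bar>(\<integral>x. h (lr l x) \<partial>P0 l) - (\<integral>x. h (g x) \<partial>P0 l)\<bar>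
      \<le> K * d + K * (\<integral>x. (lr l x - g x)\<^sup>2 \<partial>P0 l) / d"
      by (rule lip_est[OF P0_prob[OF elim(3)] ml gml sq_int[OF fml ml lr_sq_int[OF elim(3)] gml Bg] hm hb hl _ d])
         (use K in simp)
    have 1: "K * (\<integral>x. (lr l x - g x)\<^sup>2 \<partial>P0 l) / d < e / 4" using lt[OF elim(1)] .
    have 2: "K * (\<integral>x. (lr0 x - g x)\<^sup>2 \<partial>p0) / d < e / 4" using lt[OF g(2)] .
    have 3: "\<bar>(\<integral>x. h (g x) \<partial>P0 l) - (\<integral>x. h (g x) \<partial>p0)\<bar> < e / 4" using elim(2) by (simp add: dist_real_def)
    show ?case unfolding dist_real_def using estl est0 1 2 3 Kd by linarith
  qed
qed

lemma wc_all:
  fixes f :: "real \<Rightarrow> real"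
  assumes fc: "continuous_on UNIV f" and fb: "bounded (range f)"
  shows "((\<lambda>l. \<integral>x. f (lr l x) \<partial>P0 l) \<longlongrightarrow> (\<integral>x. f (lr0 x) \<partial>p0)) at_top"
proof (rule tendsto_at_topI_sequentially)
  fix X :: "nat \<Rightarrow> real" assume X: "filterlim X at_top sequentially"
  define Q where "Q n = (if X n > 0 then P0 (X n) else p0)" for n
  define \<rho> where "\<rho> n = (if X n > 0 then lr (X n) else lr0)" for n
  define \<mu> where "\<mu> n = distr (Q n) borel (\<rho> n)" for n
  define M where "M = distr p0 borel lr0"
  have PQ: "prob_space (Q n)" for n using P0_prob p0_prob by (simp add: Q_def)
  have SQn: "sets (Q n) = sets borel" for n using P0_sets p0_sets by (simp add: Q_def)
  have \<rho>m: "\<rho> n \<in> borel_measurable borel" for n using lr_meas lr0_meas by (simp add: \<rho>_def)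
  have \<rho>Q: "\<rho> n \<in> borel_measurable (Q n)" for n using meas_borel[OF SQn \<rho>m] .
  have rd: "real_distribution (\<mu> n)" for n
    unfolding \<mu>_def using prob_space.real_distribution_distr[OF PQ \<rho>Q] .
  have rdM: "real_distribution M"
    unfolding M_def using prob_space.real_distribution_distr[OF p0_prob meas_borel[OF p0_sets lr0_meas]] .
  have evX: "\<forall>\<^sub>F n in sequentially. X n > 0"
    using eventually_compose_filterlim[OF eventually_gt_at_top[of 0] X] .
  have intd: "integral\<^sup>L (\<mu> n) u = (\<integral>x. u (\<rho> n x) \<partial>Q n)" if "u \<in> borel_measurable borel" for n and u :: "real \<Rightarrow> real"
    unfolding \<mu>_def using integral_distr[OF \<rho>Q that] .
  have intM: "integral\<^sup>L M u = (\<integral>x. u (lr0 x) \<partial>p0)" if "u \<in> borel_measurable borel" for u :: "real \<Rightarrow> real"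
    unfolding M_def using integral_distr[OF meas_borel[OF p0_sets lr0_meas] that] .
  have evI: "\<forall>\<^sub>F n in sequentially. (\<integral>x. u (lr (X n) x) \<partial>P0 (X n)) = integral\<^sup>L (\<mu> n) u"
    if "u \<in> borel_measurable borel" for u :: "real \<Rightarrow> real"
    using evX by eventually_elim (simp add: intd[OF that] Q_def \<rho>_def)
  have wc: "weak_conv_m \<mu> M"
  proof (rule integral_cts_step_conv_imp_weak_conv[OF rd rdM])
    fix x y :: real assume xy: "x < y"
    have cm: "cts_step x y \<in> borel_measurable borel"
      using cts_cont[OF xy] by (rule borel_measurable_continuous_onI)
    have "((\<lambda>l. \<integral>z. cts_step x y (lr l z) \<partial>P0 l) \<longlongrightarrow> (\<integral>z. cts_step x y (lr0 z) \<partial>p0)) at_top"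
      by (rule lip_conv[OF cts_cont[OF xy] cts_bound cts_lip[OF xy]]) (use xy in simp)
    from filterlim_compose[OF this X]
    have "(\<lambda>n. \<integral>z. cts_step x y (lr (X n) z) \<partial>P0 (X n)) \<longlonglongrightarrow> (\<integral>z. cts_step x y (lr0 z) \<partial>p0)" .
    then show "(\<lambda>n. integral\<^sup>L (\<mu> n) (cts_step x y)) \<longlonglongrightarrow> integral\<^sup>L M (cts_step x y)"
      unfolding intM[OF cm] tendsto_cong[OF evI[OF cm]] .
  qed
  have fm: "f \<in> borel_measurable borel" using fc by (rule borel_measurable_continuous_onI)
  obtain B where B: "\<And>y. \<bar>f y\<bar> \<le> B" using fb unfolding bounded_real by auto
  have "(\<lambda>n. integral\<^sup>L (\<mu> n) f) \<longlonglongrightarrow> integral\<^sup>L M f"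
    by (rule weak_conv_imp_integral_bdd_continuous_conv[OF rd rdM wc, of f B])
       (use fc B in \<open>auto simp: continuous_on_eq_continuous_at\<close>)
  then show "(\<lambda>n. \<integral>x. f (lr (X n) x) \<partial>P0 (X n)) \<longlonglongrightarrow> (\<integral>x. f (lr0 x) \<partial>p0)"
    unfolding intM[OF fm] tendsto_cong[OF evI[OF fm]] .
qed

lemma weak_distr:
  "weak_conv_filter (\<lambda>l. distr (P0 l) borel (\<lambda>x. enn2real (RN_deriv (P0 l) (P1 l) x)))
      (distr p0 borel (\<lambda>x. enn2real (RN_deriv p0 p1 x))) at_top"
  unfolding weak_conv_filter_def
proof (intro allI impI)
  fix f :: "real \<Rightarrow> real" assume f: "continuous_on UNIV f \<and> bounded (range f)"
  have fm: "f \<in> borel_measurable borel" using f by (auto intro: borel_measurable_continuous_onI)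
  have ev: "\<forall>\<^sub>F l in at_top. (\<integral>x. f (lr l x) \<partial>P0 l) =
      (\<integral>x. f x \<partial>distr (P0 l) borel (\<lambda>x. enn2real (RN_deriv (P0 l) (P1 l) x)))"
    using eventually_gt_at_top[of 0]
  proof eventually_elim
    case (elim l)
    have "lr l \<in> borel_measurable (P0 l)" using meas_borel[OF P0_sets[OF elim] lr_meas[OF elim]] .
    then show ?case using integral_distr[of "lr l" "P0 l" borel f] fm by (simp add: lr_def[abs_def])
  qed
  have e0: "(\<integral>x. f x \<partial>distr p0 borel (\<lambda>x. enn2real (RN_deriv p0 p1 x))) = (\<integral>x. f (lr0 x) \<partial>p0)"
    using integral_distr[OF meas_borel[OF p0_sets lr0_meas] fm] by (simp add: lr0_def[abs_def])
  show "((\<lambda>l. \<integral>x. f x \<partial>distr (P0 l) borel (\<lambda>x. enn2real (RN_deriv (P0 l) (P1 l) x)))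
      \<longlongrightarrow> (\<integral>x. f x \<partial>distr p0 borel (\<lambda>x. enn2real (RN_deriv p0 p1 x)))) at_top"
    unfolding e0 using wc_all[of f] f tendsto_cong[OF ev] by simp
qed

end

definition phi :: "real \<Rightarrow> real" where "phi y = y * ln y"

lemma phi_bound: "y \<ge> 0 \<Longrightarrow> \<bar>phi y\<bar> \<le> 1 + y\<^sup>2"
proof -
  assume y: "y \<ge> 0"
  show ?thesis
  proof (cases "y = 0")
    case True then show ?thesis by (simp add: phi_def)
  next
    case False
    then have yp: "y > 0" using y by simp
    show ?thesis
    proof (cases "y \<le> 1")
      case True
      have "ln y \<le> 0" using True yp by simp
      have "ln (1 / y) \<le> 1 / y - 1" using yp by (intro ln_le_minus_one) simp
      then have "- ln y \<le> 1 / y - 1" using yp by (simp add: ln_div)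
      then have "y * (- ln y) \<le> y * (1 / y - 1)" using yp by (intro mult_left_mono) auto
      then have "- (y * ln y) \<le> 1 - y" using yp by (simp add: algebra_simps)
      moreover have "y * ln y \<le> 0" using \<open>ln y \<le> 0\<close> yp by (simp add: mult_nonneg_nonpos)
      ultimately show ?thesis using yp by (simp add: phi_def abs_if add_increasing2)
    next
      case False
      have l0: "ln y \<ge> 0" using False by simp
      have "ln y \<le> y - 1" using yp by (rule ln_le_minus_one)
      then have "y * ln y \<le> y * (y - 1)" using yp by (intro mult_left_mono) auto
      moreover have "y * (y - 1) \<le> y\<^sup>2" using yp by (simp add: power2_eq_square right_diff_distrib)
      ultimately have le: "y * ln y \<le> y\<^sup>2" by linarith
      have nn: "0 \<le> y * ln y" using l0 yp by simp
      have "\<bar>y * ln y\<bar> = y * ln y" using nn by (rule abs_of_nonneg)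
      then show ?thesis using le unfolding phi_def by linarith
    qed
  qed
qed

lemma phi_tail:
  assumes S: "S \<ge> 1" and y: "y \<ge> 0"
  shows "\<bar>phi y - phi (max 0 (min (S\<^sup>2) y))\<bar> \<le> 2 * y\<^sup>2 / S"
proof (cases "y \<le> S\<^sup>2")
  case True
  then show ?thesis using y S by simp
next
  case False
  have S2: "S\<^sup>2 \<ge> 1" using S by (simp add: one_le_power)
  have yS: "y > S\<^sup>2" using False by simp
  have yp: "y > 0" using yS S2 by simp
  have Sp: "S > 0" using S by simp
  have cl: "max 0 (min (S\<^sup>2) y) = S\<^sup>2" using yS S2 by simp
  have l1: "0 \<le> ln (S\<^sup>2)" using S2 by simp
  have l2: "ln (S\<^sup>2) \<le> ln y" using yS S2 by (subst ln_le_cancel_iff) auto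
  have a: "0 \<le> phi (S\<^sup>2)" using l1 S2 by (simp add: phi_def)
  have b: "phi (S\<^sup>2) \<le> phi y" unfolding phi_def using l1 l2 yS S2 by (intro mult_mono) auto
  have "ln (y / S) \<le> y / S - 1" using yp Sp by (intro ln_le_minus_one) simp
  then have c1: "ln y - ln S \<le> y / S - 1" using yp Sp by (simp add: ln_div)
  have c2: "ln S \<le> S - 1" using Sp by (rule ln_le_minus_one)
  have "S * S \<le> y" using yS by (simp add: power2_eq_square)
  then have c3: "S \<le> y / S" using Sp by (simp add: le_divide_eq)
  have lny: "ln y \<le> 2 * y / S" using c1 c2 c3 by simp
  have "phi y \<le> y * (2 * y / S)" unfolding phi_def using lny yp by (intro mult_left_mono) auto
  also have "\<dots> = 2 * y\<^sup>2 / S" by (simp add: power2_eq_square)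
  finally show ?thesis using a b cl by simp
qed

lemma phi_cont0: "continuous_on {0..} phi"
proof -
  have lim0: "(phi \<longlongrightarrow> 0) (at_right 0)"
    unfolding phi_def by real_asymp
  have atw: "at (0::real) within {0..} = at_right 0"
  proof -
    have "{0::real..} - {0} = {0<..}" by auto
    moreover have "{0::real<..} - {0} = {0<..}" by auto
    ultimately show ?thesis by (simp add: at_within_def)
  qed
  show ?thesis
    unfolding continuous_on_eq_continuous_within
  proof
    fix x :: real assume x: "x \<in> {0..}"
    show "continuous (at x within {0..}) phi"
    proof (cases "x = 0")
      case True
      show ?thesis unfolding True continuous_within atw using lim0 by (simp add: phi_def)
    next
      case False
      then have "x > 0" using x by simp
      then have "isCont phi x" unfolding phi_def by (intro continuous_intros) auto
      then show ?thesis by (rule continuous_at_imp_continuous_within)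
    qed
  qed
qed

lemma psi_bc:
  assumes R: "R \<ge> 0"
  shows "continuous_on UNIV (\<lambda>y. phi (max 0 (min R y)))" "bounded (range (\<lambda>y. phi (max 0 (min R y))))"
proof -
  have cc: "continuous_on UNIV (\<lambda>y::real. max 0 (min R y))" by (intro continuous_intros)
  show "continuous_on UNIV (\<lambda>y. phi (max 0 (min R y)))"
    by (rule continuous_on_compose2[OF phi_cont0 cc]) auto
  have "\<bar>phi (max 0 (min R y))\<bar> \<le> 1 + R\<^sup>2" for y
  proof -
    have z: "0 \<le> max 0 (min R y)" "max 0 (min R y) \<le> R" using R by auto
    have "(max 0 (min R y))\<^sup>2 \<le> R\<^sup>2" using z by (intro power_mono) auto
    then show ?thesis using phi_bound[OF z(1)] by simp
  qed
  then show "bounded (range (\<lambda>y. phi (max 0 (min R y))))"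
    unfolding bounded_real by blast
qed

lemma phi_meas[measurable]: "phi \<in> borel_measurable borel"
  unfolding phi_def by measurable

lemma phi_int:
  fixes f :: "'a \<Rightarrow> real"
  assumes P: "prob_space M" and fm: "f \<in> borel_measurable M" and f0: "\<And>x. f x \<ge> 0"
    and f2: "integrable M (\<lambda>x. (f x)\<^sup>2)"
  shows "integrable M (\<lambda>x. phi (f x))"
proof (rule Bochner_Integration.integrable_bound[where f="\<lambda>x. 1 + (f x)\<^sup>2"])
  interpret prob_space M by fact
  show "integrable M (\<lambda>x. 1 + (f x)\<^sup>2)" using f2 by auto
  show "(\<lambda>x. phi (f x)) \<in> borel_measurable M" using fm by measurable
  show "AE x in M. norm (phi (f x)) \<le> norm (1 + (f x)\<^sup>2)"
    using phi_bound[OF f0] by (auto intro!: AE_I2)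
qed

lemma tail_est:
  fixes f :: "'a \<Rightarrow> real"
  assumes P: "prob_space M" and fm: "f \<in> borel_measurable M" and f0: "\<And>x. f x \<ge> 0"
    and f2: "integrable M (\<lambda>x. (f x)\<^sup>2)" and S: "S \<ge> 1"
  shows "\<bar>(\<integral>x. phi (f x) \<partial>M) - (\<integral>x. phi (max 0 (min (S\<^sup>2) (f x))) \<partial>M)\<bar>
          \<le> 2 * (\<integral>x. (f x)\<^sup>2 \<partial>M) / S"
proof -
  interpret prob_space M by fact
  have i1: "integrable M (\<lambda>x. phi (f x))" by (rule phi_int[OF P fm f0 f2])
  obtain B where B: "\<And>y. \<bar>phi (max 0 (min (S\<^sup>2) y))\<bar> \<le> B"
    using psi_bc(2)[of "S\<^sup>2"] unfolding bounded_real by auto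
  have i2: "integrable M (\<lambda>x. phi (max 0 (min (S\<^sup>2) (f x))))"
    using fm B by (intro integrable_const_bound[where B=B]) auto
  have "\<bar>(\<integral>x. phi (f x) \<partial>M) - (\<integral>x. phi (max 0 (min (S\<^sup>2) (f x))) \<partial>M)\<bar>
      = \<bar>\<integral>x. phi (f x) - phi (max 0 (min (S\<^sup>2) (f x))) \<partial>M\<bar>" using i1 i2 by simp
  also have "\<dots> \<le> (\<integral>x. 2 * (f x)\<^sup>2 / S \<partial>M)"
    by (rule abs_int_le) (use i1 i2 f2 phi_tail[OF S f0] in auto)
  also have "\<dots> = 2 * (\<integral>x. (f x)\<^sup>2 \<partial>M) / S" by simp
  finally show ?thesis .
qed

context setting2
begin

lemma KL_eq: "l > 0 \<Longrightarrow> KL (P1 l) (P0 l) = (\<integral>x. phi (lr l x) \<partial>P0 l)"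
proof -
  assume l: "l > 0"
  have m: "(\<lambda>x. ln (lr l x)) \<in> borel_measurable borel" using lr_meas[OF l] by measurable
  have "KL (P1 l) (P0 l) = (\<integral>x. ln (lr l x) \<partial>P1 l)"
    unfolding KL_def KL_divergence_def entropy_density_def by (simp add: lr_def[abs_def] log_def o_def)
  also have "\<dots> = (\<integral>x. phi (lr l x) \<partial>P0 l)"
    using lr_int[OF l m] by (simp add: phi_def)
  finally show ?thesis .
qed

lemma KL_eq0: "KL p1 p0 = (\<integral>x. phi (lr0 x) \<partial>p0)"
proof -
  have m: "(\<lambda>x. ln (lr0 x)) \<in> borel_measurable borel" using lr0_meas by measurable
  have "KL p1 p0 = (\<integral>x. ln (lr0 x) \<partial>p1)"
    unfolding KL_def KL_divergence_def entropy_density_def by (simp add: lr0_def[abs_def] log_def o_def)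
  also have "\<dots> = (\<integral>x. phi (lr0 x) \<partial>p0)"
    using lr0_int[OF m] by (simp add: phi_def)
  finally show ?thesis .
qed

lemma KL_conv: "((\<lambda>l. KL (P1 l) (P0 l)) \<longlongrightarrow> KL p1 p0) at_top"
proof -
  have ev: "\<forall>\<^sub>F l in at_top. (\<integral>x. phi (lr l x) \<partial>P0 l) = KL (P1 l) (P0 l)"
    using eventually_gt_at_top[of 0] by eventually_elim (rule KL_eq[symmetric])
  have "((\<lambda>l. \<integral>x. phi (lr l x) \<partial>P0 l) \<longlongrightarrow> (\<integral>x. phi (lr0 x) \<partial>p0)) at_top"
  proof (rule tendstoI)
    fix e :: real assume e: "e > 0"
    define S where "S = max 1 (8 * c / e)"
    have S1: "S \<ge> 1" by (simp add: S_def)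
    have Sp: "S > 0" using S1 by simp
    have cS: "2 * c / S \<le> e / 4"
    proof -
      have "8 * c / e \<le> S" by (simp add: S_def)
      then have "8 * c \<le> S * e" using e by (simp add: divide_le_eq)
      then show ?thesis using Sp e by (simp add: divide_le_eq field_simps)
    qed
    define R where "R = S\<^sup>2"
    have R: "R \<ge> 0" by (simp add: R_def)
    have ev1: "\<forall>\<^sub>F l in at_top. dist (\<integral>x. phi (max 0 (min R (lr l x))) \<partial>P0 l)
                                    (\<integral>x. phi (max 0 (min R (lr0 x))) \<partial>p0) < e / 2"
      using tendstoD[OF wc_all[OF psi_bc[OF R]], of "e/2"] e by simp
    have m0: "lr0 \<in> borel_measurable p0" using meas_borel[OF p0_sets lr0_meas] .
    have t0: "\<bar>(\<integral>x. phi (lr0 x) \<partial>p0) - (\<integral>x. phi (max 0 (min R (lr0 x))) \<partial>p0)\<bar> \<le> e / 4"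
    proof -
      have "\<bar>(\<integral>x. phi (lr0 x) \<partial>p0) - (\<integral>x. phi (max 0 (min R (lr0 x))) \<partial>p0)\<bar>
          \<le> 2 * (\<integral>x. (lr0 x)\<^sup>2 \<partial>p0) / S"
        unfolding R_def by (rule tail_est[OF p0_prob m0 lr0_nonneg lr0_sq_int S1])
      also have "\<dots> \<le> 2 * c / S" using lr0_sq_le Sp by (simp add: divide_right_mono)
      finally show ?thesis using cS by simp
    qed
    show "\<forall>\<^sub>F l in at_top. dist (\<integral>x. phi (lr l x) \<partial>P0 l) (\<integral>x. phi (lr0 x) \<partial>p0) < e"
      using ev1 eventually_gt_at_top[of 0]
    proof eventually_elim
      case (elim l)
      have ml: "lr l \<in> borel_measurable (P0 l)" using meas_borel[OF P0_sets[OF elim(2)] lr_meas[OF elim(2)]] .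
      have "\<bar>(\<integral>x. phi (lr l x) \<partial>P0 l) - (\<integral>x. phi (max 0 (min R (lr l x))) \<partial>P0 l)\<bar>
          \<le> 2 * (\<integral>x. (lr l x)\<^sup>2 \<partial>P0 l) / S"
        unfolding R_def
        by (rule tail_est[OF P0_prob[OF elim(2)] ml lr_nonneg[OF elim(2)] lr_sq_int[OF elim(2)] S1])
      also have "\<dots> \<le> 2 * c / S" using lr_sq_le[OF elim(2)] Sp by (simp add: divide_right_mono)
      finally have tl: "\<bar>(\<integral>x. phi (lr l x) \<partial>P0 l) - (\<integral>x. phi (max 0 (min R (lr l x))) \<partial>P0 l)\<bar> \<le> e / 4"
        using cS by simp
      show ?case using tl t0 elim(1) unfolding dist_real_def by linarith
    qed
  qed
  then show ?thesis unfolding KL_eq0 tendsto_cong[OF ev] .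
qed

end

theorem proposition4:
  fixes P0 P1 :: "real \<Rightarrow> 'a::polish_space measure"
    and p0 p1 :: "'a measure"
    and c :: real
  assumes P0_prob: "\<And>l. l > 0 \<Longrightarrow> prob_space (P0 l)"
    and P1_prob: "\<And>l. l > 0 \<Longrightarrow> prob_space (P1 l)"
    and P0_sets: "\<And>l. l > 0 \<Longrightarrow> sets (P0 l) = sets borel"
    and P1_sets: "\<And>l. l > 0 \<Longrightarrow> sets (P1 l) = sets borel"
    and ac: "\<And>l. l > 0 \<Longrightarrow> absolutely_continuous (P0 l) (P1 l)"
    and p0_prob: "prob_space p0" and p1_prob: "prob_space p1"
    and p0_sets: "sets p0 = sets borel" and p1_sets: "sets p1 = sets borel"
    and conv0: "weak_conv_filter P0 p0 at_top"
    and conv1: "weak_conv_filter P1 p1 at_top"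
    and c_pos: "c > 0"
    and bound: "\<And>l. l > 0 \<Longrightarrow> (\<integral>\<^sup>+ x. (RN_deriv (P0 l) (P1 l) x)\<^sup>2 \<partial>P0 l) \<le> ennreal c"
  shows "absolutely_continuous p0 p1 \<and>
    (((\<lambda>l. \<integral>\<^sup>+ x. (RN_deriv (P0 l) (P1 l) x)\<^sup>2 \<partial>P0 l)
        \<longlongrightarrow> (\<integral>\<^sup>+ x. (RN_deriv p0 p1 x)\<^sup>2 \<partial>p0)) at_top
     \<longrightarrow>
       weak_conv_filter (\<lambda>l. distr (P0 l) borel (\<lambda>x. enn2real (RN_deriv (P0 l) (P1 l) x)))
                        (distr p0 borel (\<lambda>x. enn2real (RN_deriv p0 p1 x))) at_top
     \<and> ((\<lambda>l. KL (P1 l) (P0 l)) \<longlongrightarrow> KL p1 p0) at_top)"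
proof -
  have S: "setting P0 P1 p0 p1 c"
    by (rule setting.intro) (fact assms)+
  interpret S: setting P0 P1 p0 p1 c by (rule S)
  show ?thesis
  proof (intro conjI impI)
    show "absolutely_continuous p0 p1" by (rule S.abs_cont)
  next
    assume SQ: "((\<lambda>l. \<integral>\<^sup>+ x. (RN_deriv (P0 l) (P1 l) x)\<^sup>2 \<partial>P0 l)
        \<longlongrightarrow> (\<integral>\<^sup>+ x. (RN_deriv p0 p1 x)\<^sup>2 \<partial>p0)) at_top"
    interpret S2: setting2 P0 P1 p0 p1 c
      by (rule setting2.intro[OF S setting2_axioms.intro[OF SQ]])
    show "weak_conv_filter (\<lambda>l. distr (P0 l) borel (\<lambda>x. enn2real (RN_deriv (P0 l) (P1 l) x)))
                        (distr p0 borel (\<lambda>x. enn2real (RN_deriv p0 p1 x))) at_top"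
      by (rule S2.weak_distr)
    show "((\<lambda>l. KL (P1 l) (P0 l)) \<longlongrightarrow> KL p1 p0) at_top" by (rule S2.KL_conv)
  qed
qed

end
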